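(* Let $G\in\mathcal G^3_2$, let $a\in V(G)$ with $d(a)=3$, and let $x_1,x_2$ be two distinct neighbours of $a$. Suppose that for $j=1,2$ the vertex $x_j$ belongs to a $5$-leaf $X_j$ of $G$, where $X_1$ and $X_2$ are vertex-disjoint and $a\notin V(X_1)\cup V(X_2)$. Let $G'$ be obtained from $G-\big((V(X_1)\cup V(X_2))\setminus\{x_1,x_2\}\big)$ by adding the new edge $x_1x_2$. Then $\lambda(G')\ge v(G')/4$ implies $\lambda(G)\ge v(G)/4$.
   Context: All graphs are finite and simple. For integers $1\le r\le s$, $\mathcal G^s_r$ denotes the set of graphs in which every vertex has degree at least $r$ and at most $s$. $d(x)$ is the degree of $x$ in $G$, $v(\cdot)$ the number of vertices. $\lambda(G)$ denotes the maximum number of pairwise vertex-disjoint subgraphs of $G$ each of which is a path with exactly two edges. A block of a connected graph is a maximal connected subgraph $H$ such that $H-v$ is connected for every $v\in V(H)$. A block $B$ of $G$ is an end-block if exactly one vertex of $B$ is adjacent to a vertex of $G-B$. A leaf of $G$ is a vertex of degree one or an end-block with at least two edges; a $5$-leaf is a leaf with exactly $5$ vertices. *)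

theory Defs
  imports Complex_Main
begin

definition graph :: "'a set \<Rightarrow> 'a set set \<Rightarrow> bool" where
  "graph V E \<longleftrightarrow> finite V \<and> (\<forall>e\<in>E. \<exists>u v. u \<noteq> v \<and> u \<in> V \<and> v \<in> V \<and> e = {u, v})"

definition degree :: "'a set \<Rightarrow> 'a set set \<Rightarrow> 'a \<Rightarrow> nat" where
  "degree V E x = card {y \<in> V. {x, y} \<in> E}"

definition in_Grs :: "nat \<Rightarrow> nat \<Rightarrow> 'a set \<Rightarrow> 'a set set \<Rightarrow> bool" where
  "in_Grs r s V E \<longleftrightarrow> graph V E \<and> (\<forall>x\<in>V. r \<le> degree V E x \<and> degree V E x \<le> s)"

definition subgraph :: "'a set \<Rightarrow> 'a set set \<Rightarrow> 'a set \<Rightarrow> 'a set set \<Rightarrow> bool" where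
  "subgraph VH EH V E \<longleftrightarrow> VH \<subseteq> V \<and> EH \<subseteq> E \<and> graph VH EH"

definition connected_graph :: "'a set \<Rightarrow> 'a set set \<Rightarrow> bool" where
  "connected_graph V E \<longleftrightarrow> V \<noteq> {} \<and>
     (\<forall>u\<in>V. \<forall>v\<in>V. (\<lambda>x y. {x, y} \<in> E)\<^sup>*\<^sup>* u v)"

definition del_vertex_edges :: "'a set set \<Rightarrow> 'a \<Rightarrow> 'a set set" where
  "del_vertex_edges E v = {e \<in> E. v \<notin> e}"

definition block_prop :: "'a set \<Rightarrow> 'a set set \<Rightarrow> bool" where
  "block_prop VH EH \<longleftrightarrow> connected_graph VH EH \<and>
     (\<forall>v\<in>VH. connected_graph (VH - {v}) (del_vertex_edges EH v))"

definition is_block :: "'a set \<Rightarrow> 'a set set \<Rightarrow> 'a set \<Rightarrow> 'a set set \<Rightarrow> bool" where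
  "is_block V E VB EB \<longleftrightarrow> subgraph VB EB V E \<and> block_prop VB EB \<and>
     (\<forall>VH EH. subgraph VH EH V E \<and> VB \<subseteq> VH \<and> EB \<subseteq> EH \<and> block_prop VH EH
        \<longrightarrow> VH = VB \<and> EH = EB)"

definition is_end_block :: "'a set \<Rightarrow> 'a set set \<Rightarrow> 'a set \<Rightarrow> 'a set set \<Rightarrow> bool" where
  "is_end_block V E VB EB \<longleftrightarrow> is_block V E VB EB \<and>
     card {u \<in> VB. \<exists>w \<in> V - VB. {u, w} \<in> E} = 1"

text \<open>A 5-leaf: a leaf with exactly 5 vertices; a degree-one vertex has one vertex,
  so a 5-leaf is an end-block with at least two edges and exactly 5 vertices.\<close>
definition is_5leaf :: "'a set \<Rightarrow> 'a set set \<Rightarrow> 'a set \<Rightarrow> 'a set set \<Rightarrow> bool" where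
  "is_5leaf V E VX EXX \<longleftrightarrow> is_end_block V E VX EXX \<and> card EXX \<ge> 2 \<and> card VX = 5"

definition is_P3 :: "'a set set \<Rightarrow> 'a set \<Rightarrow> 'a set set \<Rightarrow> bool" where
  "is_P3 E S T \<longleftrightarrow> (\<exists>u v w. u \<noteq> v \<and> v \<noteq> w \<and> u \<noteq> w \<and>
      S = {u, v, w} \<and> T = {{u, v}, {v, w}} \<and> T \<subseteq> E)"

definition lambda :: "'a set \<Rightarrow> 'a set set \<Rightarrow> nat" where
  "lambda V E = Max {card F | F. (\<forall>(S, T)\<in>F. S \<subseteq> V \<and> is_P3 E S T) \<and>
      (\<forall>X\<in>F. \<forall>Y\<in>F. X \<noteq> Y \<longrightarrow> fst X \<inter> fst Y = {})}"

end

theory Submission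
  imports Defs
begin

definition pk :: "'a set \<Rightarrow> 'a set set \<Rightarrow> ('a set \<times> 'a set set) set \<Rightarrow> bool" where
  "pk V E F \<longleftrightarrow> (\<forall>(S, T)\<in>F. S \<subseteq> V \<and> is_P3 E S T) \<and>
      (\<forall>X\<in>F. \<forall>Y\<in>F. X \<noteq> Y \<longrightarrow> fst X \<inter> fst Y = {})"

lemma lambda_pk: "lambda V E = Max {card F | F. pk V E F}"
  unfolding lambda_def pk_def by simp

lemma is_P3_ne: "is_P3 E S T \<Longrightarrow> S \<noteq> {}"
  unfolding is_P3_def by auto

lemma is_P3_sub: "is_P3 E S T \<Longrightarrow> T \<subseteq> E"
  unfolding is_P3_def by auto

lemma is_P3_mono: "is_P3 E' S T \<Longrightarrow> T \<subseteq> E \<Longrightarrow> is_P3 E S T"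
  unfolding is_P3_def by blast

lemma pk_inj: "pk V E F \<Longrightarrow> inj_on fst F"
  unfolding pk_def inj_on_def
  by (metis (no_types, lifting) case_prod_beta inf.idem is_P3_ne)

lemma pk_card_le: "finite V \<Longrightarrow> pk V E F \<Longrightarrow> card F \<le> card (Pow V)"
proof -
  assume fV: "finite V" and p: "pk V E F"
  have "card F = card (fst ` F)" using pk_inj[OF p] by (simp add: card_image)
  also have "\<dots> \<le> card (Pow V)"
    by (rule card_mono) (use fV p in \<open>fastforce simp: pk_def case_prod_beta\<close>)+
  finally show ?thesis .
qed

lemma pk_finite: "finite V \<Longrightarrow> pk V E F \<Longrightarrow> finite F"
proof -
  assume fV: "finite V" and p: "pk V E F"
  have "fst ` F \<subseteq> Pow V" using p by (fastforce simp: pk_def case_prod_beta)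
  hence "finite (fst ` F)" using fV by (meson finite_Pow_iff finite_subset)
  thus ?thesis using pk_inj[OF p] finite_imageD by blast
qed

lemma lambda_ge: "finite V \<Longrightarrow> pk V E F \<Longrightarrow> card F \<le> lambda V E"
proof -
  assume fV: "finite V" and p: "pk V E F"
  have fin: "finite {card F | F. pk V E F}"
    by (rule finite_subset[of _ "{..card (Pow V)}"]) (use pk_card_le[OF fV] in auto)
  show ?thesis unfolding lambda_pk using fin p by (auto intro: Max_ge)
qed

lemma lambda_obtain: "finite V \<Longrightarrow> \<exists>F. pk V E F \<and> card F = lambda V E"
proof -
  assume fV: "finite V"
  have fin: "finite {card F | F. pk V E F}"
    by (rule finite_subset[of _ "{..card (Pow V)}"]) (use pk_card_le[OF fV] in auto)
  have "pk V E {}" by (simp add: pk_def)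
  hence ne: "{card F | F. pk V E F} \<noteq> {}" by blast
  show ?thesis unfolding lambda_pk using Max_in[OF fin ne] by auto
qed

lemma pk_union:
  assumes "pk V E F" "pk V E G" "\<forall>X\<in>F. \<forall>Y\<in>G. fst X \<inter> fst Y = {}"
  shows "pk V E (F \<union> G)"
proof -
  have a: "\<forall>(S, T)\<in>F. S \<subseteq> V \<and> is_P3 E S T" "\<forall>X\<in>F. \<forall>Y\<in>F. X \<noteq> Y \<longrightarrow> fst X \<inter> fst Y = {}"
    using assms(1) unfolding pk_def by auto
  have b: "\<forall>(S, T)\<in>G. S \<subseteq> V \<and> is_P3 E S T" "\<forall>X\<in>G. \<forall>Y\<in>G. X \<noteq> Y \<longrightarrow> fst X \<inter> fst Y = {}"
    using assms(2) unfolding pk_def by auto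
  have c: "\<forall>(S, T)\<in>F \<union> G. S \<subseteq> V \<and> is_P3 E S T" using a(1) b(1) by blast
  have d: "\<forall>X\<in>F \<union> G. \<forall>Y\<in>F \<union> G. X \<noteq> Y \<longrightarrow> fst X \<inter> fst Y = {}"
  proof (intro ballI impI)
    fix X Y assume "X \<in> F \<union> G" "Y \<in> F \<union> G" "X \<noteq> Y"
    thus "fst X \<inter> fst Y = {}" using a(2) b(2) assms(3) by (metis Int_commute Un_iff)
  qed
  show ?thesis unfolding pk_def using c d by blast
qed

lemma pk_union_card:
  assumes "finite V" "pk V E F" "pk V E G" "\<forall>X\<in>F. \<forall>Y\<in>G. fst X \<inter> fst Y = {}"
  shows "card (F \<union> G) = card F + card G"
proof -
  have "F \<inter> G = {}"
  proof (rule ccontr)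
    assume "F \<inter> G \<noteq> {}"
    then obtain X where "X \<in> F" "X \<in> G" by auto
    with assms(2,4) show False unfolding pk_def
      by (metis (no_types, lifting) case_prod_beta inf.idem is_P3_ne)
  qed
  thus ?thesis using pk_finite[OF assms(1,2)] pk_finite[OF assms(1,3)] by (simp add: card_Un_disjoint)
qed

lemma pk_single: "S \<subseteq> V \<Longrightarrow> is_P3 E S T \<Longrightarrow> pk V E {(S, T)}"
  unfolding pk_def by auto

lemma pk_subset: "pk V E F \<Longrightarrow> G \<subseteq> F \<Longrightarrow> pk V E G"
  unfolding pk_def by blast

lemma graph_edge: "graph V E \<Longrightarrow> {u, v} \<in> E \<Longrightarrow> u \<in> V \<and> v \<in> V \<and> u \<noteq> v"
  unfolding graph_def by (smt (verit) doubleton_eq_iff insert_absorb2 insert_not_empty singleton_insert_inj_eq)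

lemma cross:
  assumes "R\<^sup>*\<^sup>* r p" "r \<notin> A" "p \<in> A"
  shows "\<exists>s t. R s t \<and> s \<notin> A \<and> t \<in> A"
  using assms by (induction rule: rtranclp_induct) auto

lemma leaf_facts:
  assumes "is_5leaf V E VX EY"
  shows "VX \<subseteq> V" "EY \<subseteq> E" "graph VX EY" "card VX = 5" "block_prop VX EY" "finite VX"
proof -
  have b: "is_block V E VX EY" and c5: "card VX = 5" using assms unfolding is_5leaf_def is_end_block_def by auto
  have s: "subgraph VX EY V E" "block_prop VX EY" using b unfolding is_block_def by auto
  from s(1) have "VX \<subseteq> V" "EY \<subseteq> E" "graph VX EY" unfolding subgraph_def by auto
  with c5 s(2) show "VX \<subseteq> V" "EY \<subseteq> E" "graph VX EY" "card VX = 5" "block_prop VX EY" "finite VX"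
    unfolding graph_def by auto
qed

lemma neighbour_in:
  assumes g: "graph VX EY" and c: "connected_graph VX EY" and w: "w \<in> VX" "x \<in> VX" "w \<noteq> x"
  shows "\<exists>s. s \<in> VX \<and> s \<noteq> x \<and> {s, x} \<in> EY"
proof -
  have "(\<lambda>x y. {x, y} \<in> EY)\<^sup>*\<^sup>* w x" using c w unfolding connected_graph_def by blast
  from cross[OF this, of "{x}"] w obtain s where "{s, x} \<in> EY" "s \<noteq> x" by auto
  thus ?thesis using graph_edge[OF g] by blast
qed

lemma two_neighbours:
  assumes L: "is_5leaf V E VX EY" and x: "x \<in> VX"
  shows "\<exists>u1 u2. u1 \<noteq> u2 \<and> u1 \<in> VX \<and> u2 \<in> VX \<and> u1 \<noteq> x \<and> u2 \<noteq> x \<and> {u1, x} \<in> E \<and> {u2, x} \<in> E"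
proof -
  note F = leaf_facts[OF L]
  have bp: "connected_graph VX EY" "\<forall>v\<in>VX. connected_graph (VX - {v}) (del_vertex_edges EY v)"
    using F(5) unfolding block_prop_def by auto
  have "card (VX - {x}) = 4" using F(4,6) x by simp
  then obtain w where w: "w \<in> VX" "w \<noteq> x" by (metis DiffE card.empty insertCI zero_neq_numeral equals0I)
  obtain u1 where u1: "u1 \<in> VX" "u1 \<noteq> x" "{u1, x} \<in> EY" using neighbour_in[OF F(3) bp(1) w(1) x w(2)] by blast
  have "card (VX - {x, u1}) = 3" using F(4,6) x u1 by (simp add: card_Diff_subset)
  then obtain w2 where w2: "w2 \<in> VX" "w2 \<noteq> x" "w2 \<noteq> u1" by (metis DiffE card.empty insertCI zero_neq_numeral equals0I)
  have gd: "graph (VX - {u1}) (del_vertex_edges EY u1)"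
    using F(3) unfolding graph_def del_vertex_edges_def by (simp; fastforce)
  obtain u2 where u2: "u2 \<in> VX - {u1}" "u2 \<noteq> x" "{u2, x} \<in> del_vertex_edges EY u1"
    using neighbour_in[OF gd bp(2)[rule_format, OF u1(1)], of w2 x] w2 x u1 by auto
  show ?thesis
    apply (rule exI[of _ u1], rule exI[of _ u2])
    using u1 u2 F(2) by (auto simp: del_vertex_edges_def)
qed

lemma only_outside:
  assumes G: "in_Grs 2 3 V E" and L: "is_5leaf V E VX EY" and x: "x \<in> VX"
    and a: "{a, x} \<in> E" "a \<notin> VX" and y: "y \<in> V" "y \<notin> VX" "{x, y} \<in> E"
  shows "y = a"
proof (rule ccontr)
  assume ya: "y \<noteq> a"
  note F = leaf_facts[OF L]
  have gV: "graph V E" using G unfolding in_Grs_def by auto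
  hence fV: "finite V" unfolding graph_def by auto
  have xV: "x \<in> V" using x F(1) by auto
  have aV: "a \<in> V" using graph_edge[OF gV a(1)] by auto
  have deg: "card {z \<in> V. {x, z} \<in> E} \<le> 3" using G xV unfolding in_Grs_def degree_def by auto
  obtain u1 u2 where u: "u1 \<noteq> u2" "u1 \<in> VX" "u2 \<in> VX" "{u1, x} \<in> E" "{u2, x} \<in> E"
    using two_neighbours[OF L x] by blast
  have e1: "{x, a} \<in> E" "{x, u1} \<in> E" "{x, u2} \<in> E" using a(1) u(4,5) by (simp_all add: insert_commute)
  have sub: "{a, y, u1, u2} \<subseteq> {z \<in> V. {x, z} \<in> E}"
    using e1 y aV u(2,3) F(1) by blast
  have "a \<noteq> u1" "a \<noteq> u2" "y \<noteq> u1" "y \<noteq> u2" using u a y by auto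
  hence "card {a, y, u1, u2} = 4" using u ya by auto
  moreover have "card {a, y, u1, u2} \<le> 3"
  proof -
    have fin: "finite {z \<in> V. {x, z} \<in> E}" using fV by simp
    show ?thesis using card_mono[OF fin sub] deg by linarith
  qed
  ultimately show False by simp
qed

lemma leaf_P3:
  assumes L: "is_5leaf V E VX EY" and x: "x \<in> VX"
  shows "\<exists>S T. S \<subseteq> VX - {x} \<and> is_P3 E S T"
proof -
  note F = leaf_facts[OF L]
  let ?W = "VX - {x}" and ?D = "del_vertex_edges EY x"
  have c: "connected_graph ?W ?D" using F(5) x unfolding block_prop_def by auto
  have gd: "graph ?W ?D"
    using F(3) unfolding graph_def del_vertex_edges_def by (simp; fastforce)
  have cW: "card ?W = 4" using F(4,6) x by simp
  then obtain p where p: "p \<in> ?W" by (metis card.empty zero_neq_numeral equals0I)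
  have "card (?W - {p}) = 3" using cW p F(6) by simp
  then obtain q where q: "q \<in> ?W" "q \<noteq> p" by (metis DiffE card.empty insertCI zero_neq_numeral equals0I)
  obtain s where s: "s \<in> ?W" "s \<noteq> p" "{s, p} \<in> ?D" using neighbour_in[OF gd c q(1) p q(2)] by blast
  have "card (?W - {p, s}) = 2" using cW p s F(6) by (simp add: card_Diff_subset)
  then obtain r where r: "r \<in> ?W" "r \<noteq> p" "r \<noteq> s" by (metis DiffE card.empty insertCI zero_neq_numeral equals0I)
  have "(\<lambda>x y. {x, y} \<in> ?D)\<^sup>*\<^sup>* r p" using c r p unfolding connected_graph_def by blast
  from cross[OF this, of "{p, s}"] r obtain s' t' where st: "{s', t'} \<in> ?D" "s' \<notin> {p, s}" "t' \<in> {p, s}" by auto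
  have s'W: "s' \<in> ?W" using graph_edge[OF gd st(1)] by auto
  have DE: "?D \<subseteq> E" using F(2) unfolding del_vertex_edges_def by auto
  show ?thesis
  proof (cases "t' = p")
    case True
    have "is_P3 E {s, p, s'} {{s, p}, {p, s'}}"
    proof -
      have "{s, p} \<in> E" using s(3) DE by blast
      moreover have "{p, s'} \<in> E" using st(1) True DE by (metis insert_commute subsetD)
      ultimately show ?thesis
        unfolding is_P3_def apply (rule_tac exI[of _ s], rule_tac exI[of _ p], rule_tac exI[of _ s'])
        using s st by auto
    qed
    moreover have "{s, p, s'} \<subseteq> ?W" using s p s'W by auto
    ultimately show ?thesis by blast
  next
    case False
    hence "t' = s" using st by auto
    have "is_P3 E {p, s, s'} {{p, s}, {s, s'}}"
    proof -
      have "{p, s} \<in> E" using s(3) DE by (metis insert_commute subsetD)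
      moreover have "{s, s'} \<in> E" using st(1) \<open>t' = s\<close> DE by (metis insert_commute subsetD)
      ultimately show ?thesis
        unfolding is_P3_def apply (rule_tac exI[of _ p], rule_tac exI[of _ s], rule_tac exI[of _ s'])
        using s st by auto
    qed
    moreover have "{p, s, s'} \<subseteq> ?W" using s p s'W by auto
    ultimately show ?thesis by blast
  qed
qed

theorem lemma3p6:
  fixes V :: "'a set" and E :: "'a set set" and a x1 x2 :: 'a
    and VX1 VX2 :: "'a set" and EY1 EY2 :: "'a set set"
  assumes G: "in_Grs 2 3 V E"
    and a: "a \<in> V" "degree V E a = 3"
    and x: "{a, x1} \<in> E" "{a, x2} \<in> E" "x1 \<noteq> x2"
    and X1: "is_5leaf V E VX1 EY1" "x1 \<in> VX1"
    and X2: "is_5leaf V E VX2 EY2" "x2 \<in> VX2"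
    and disj: "VX1 \<inter> VX2 = {}" "a \<notin> VX1 \<union> VX2"
    and lam: "real (lambda (V - ((VX1 \<union> VX2) - {x1, x2}))
                 ({e \<in> E. e \<subseteq> V - ((VX1 \<union> VX2) - {x1, x2})} \<union> {{x1, x2}}))
              \<ge> real (card (V - ((VX1 \<union> VX2) - {x1, x2}))) / 4"
  shows "real (lambda V E) \<ge> real (card V) / 4"
proof -
  define D where "D = (VX1 \<union> VX2) - {x1, x2}"
  define V' where "V' = V - D"
  define E' where "E' = {e \<in> E. e \<subseteq> V'} \<union> {{x1, x2}}"
  note F1 = leaf_facts[OF X1(1)] and F2 = leaf_facts[OF X2(1)]
  have gV: "graph V E" using G unfolding in_Grs_def by auto
  hence fV: "finite V" unfolding graph_def by auto
  have DV: "D \<subseteq> V" using F1(1) F2(1) unfolding D_def by auto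
  have cU: "card (VX1 \<union> VX2) = 10" using F1(4,6) F2(4,6) disj(1) by (simp add: card_Un_disjoint)
  have cD: "card D = 8" unfolding D_def using cU X1(2) X2(2) F1(6) F2(6) x(3)
    by (simp add: card_Diff_subset)
  have c1: "card V' = card V - card D" unfolding V'_def using card_Diff_subset[OF finite_subset[OF DV fV] DV] .
  have c2: "card D \<le> card V" using card_mono[OF fV DV] .
  have cV: "card V = card V' + 8" using c1 c2 cD by linarith
  have fV': "finite V'" unfolding V'_def using fV by simp
  obtain F' where F': "pk V' E' F'" "card F' = lambda V' E'" using lambda_obtain[OF fV'] by blast
  obtain S1 T1 where P1: "S1 \<subseteq> VX1 - {x1}" "is_P3 E S1 T1" using leaf_P3[OF X1] by blast
  obtain S2 T2 where P2: "S2 \<subseteq> VX2 - {x2}" "is_P3 E S2 T2" using leaf_P3[OF X2] by blast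
  have S1V': "S1 \<inter> V' = {}" using P1(1) X2(2) disj(1) unfolding V'_def D_def by blast
  have S2V': "S2 \<inter> V' = {}" using P2(1) X1(2) disj(1) unfolding V'_def D_def by blast
  let ?Q = "{(S1, T1), (S2, T2)}"
  have pQ: "pk V E ?Q"
  proof -
    have "pk V E ({(S1, T1)} \<union> {(S2, T2)})"
      apply (rule pk_union)
      using pk_single[OF _ P1(2), of V] pk_single[OF _ P2(2), of V] P1(1) P2(1) F1(1) F2(1) disj(1)
      by auto
    thus ?thesis by (simp add: insert_commute)
  qed
  have cQ: "card ?Q = 2"
  proof -
    have "S1 \<noteq> {}" using is_P3_ne[OF P1(2)] .
    hence "S1 \<noteq> S2" using P1(1) P2(1) disj(1) by blast
    thus ?thesis by simp
  qed
  define F0 where "F0 = {p \<in> F'. {x1, x2} \<notin> snd p}"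
  have pF0: "pk V E F0"
  proof -
    have "pk V E F0" unfolding pk_def
    proof (intro conjI ballI)
      fix X assume "X \<in> F0"
      then obtain S T where X: "X = (S, T)" "(S, T) \<in> F'" "{x1, x2} \<notin> T" unfolding F0_def
        by (metis (mono_tags, lifting) mem_Collect_eq prod.collapse)
      have "S \<subseteq> V'" "is_P3 E' S T" using F'(1) X(2) unfolding pk_def by auto
      moreover have "T \<subseteq> E" using is_P3_sub[OF \<open>is_P3 E' S T\<close>] X(3) unfolding E'_def by auto
      ultimately show "case X of (S, T) \<Rightarrow> S \<subseteq> V \<and> is_P3 E S T"
        using X(1) is_P3_mono unfolding V'_def by auto
    next
      fix X Y assume "X \<in> F0" "Y \<in> F0"
      thus "X \<noteq> Y \<longrightarrow> fst X \<inter> fst Y = {}" using F'(1) unfolding pk_def F0_def by auto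
    qed
    thus ?thesis .
  qed
  have F0sub: "\<forall>X\<in>F0. fst X \<subseteq> V'" using F'(1) unfolding F0_def pk_def by auto
  have F0Q: "\<forall>X\<in>F0. \<forall>Y\<in>?Q. fst X \<inter> fst Y = {}" using F0sub S1V' S2V' by auto
  have cF0Q: "card (F0 \<union> ?Q) = card F0 + 2" using pk_union_card[OF fV pF0 pQ F0Q] cQ by simp
  have pF0Q: "pk V E (F0 \<union> ?Q)" using pk_union[OF pF0 pQ F0Q] .
  have main: "lambda V' E' + 2 \<le> lambda V E"
  proof (cases "F0 = F'")
    case True
    thus ?thesis using lambda_ge[OF fV pF0Q] cF0Q F'(2) by simp
  next
    case False
    then obtain S0 T0 where p0: "(S0, T0) \<in> F'" "{x1, x2} \<in> T0" unfolding F0_def by auto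
    have S0: "S0 \<subseteq> V'" "is_P3 E' S0 T0" using F'(1) p0(1) unfolding pk_def by auto
    have edges_in: "\<forall>e\<in>T0. e \<subseteq> S0" using S0(2) unfolding is_P3_def by auto
    have "\<exists>c y. c \<in> {x1, x2} \<and> y \<notin> {x1, x2} \<and> y \<in> S0 \<and> {c, y} \<in> T0"
    proof -
      obtain u v w where uvw: "u \<noteq> v" "v \<noteq> w" "u \<noteq> w" "S0 = {u, v, w}" "T0 = {{u, v}, {v, w}}"
        using S0(2) unfolding is_P3_def by blast
      show ?thesis
      proof (cases "{x1, x2} = {u, v}")
        case True
        hence "v \<in> {x1, x2}" "w \<notin> {x1, x2}" using uvw by (auto simp: doubleton_eq_iff)
        thus ?thesis using uvw by blast
      next
        case False
        hence "{x1, x2} = {v, w}" using p0(2) uvw by auto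
        hence "v \<in> {x1, x2}" "u \<notin> {x1, x2}" using uvw by (auto simp: doubleton_eq_iff)
        thus ?thesis using uvw by (metis insert_commute insertCI)
      qed
    qed
    then obtain c y where cy: "c \<in> {x1, x2}" "y \<notin> {x1, x2}" "y \<in> S0" "{c, y} \<in> T0" by blast
    have "{c, y} \<noteq> {x1, x2}" using cy(2) by auto
    hence cyE: "{c, y} \<in> E" "{c, y} \<subseteq> V'" using is_P3_sub[OF S0(2)] cy(4) unfolding E'_def by auto
    have yV: "y \<in> V" "y \<notin> VX1" "y \<notin> VX2" using cyE(2) cy(2) unfolding V'_def D_def by auto
    have ya: "y = a"
    proof (cases "c = x1")
      case True
      show ?thesis
        by (rule only_outside[OF G X1 _ _ yV(1,2)]) (use x disj cyE True in \<open>simp_all add: insert_commute\<close>)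
    next
      case False
      hence "c = x2" using cy(1) by auto
      show ?thesis
        by (rule only_outside[OF G X2 _ _ yV(1,3)]) (use x disj cyE \<open>c = x2\<close> in \<open>simp_all add: insert_commute\<close>)
    qed
    have aS0: "{x1, a, x2} \<subseteq> S0" using edges_in p0(2) cy(3) ya by auto
    have uniq: "\<And>X. X \<in> F' \<Longrightarrow> {x1, x2} \<in> snd X \<Longrightarrow> X = (S0, T0)"
    proof (rule ccontr)
      fix X assume X: "X \<in> F'" "{x1, x2} \<in> snd X" "X \<noteq> (S0, T0)"
      have "fst X \<inter> S0 = {}" using F'(1) X p0(1) unfolding pk_def by (metis fst_conv)
      moreover have "x1 \<in> fst X"
      proof -
        have "is_P3 E' (fst X) (snd X)" using F'(1) X(1) unfolding pk_def by (metis case_prod_beta)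
        hence "\<forall>e\<in>snd X. e \<subseteq> fst X" unfolding is_P3_def by auto
        thus ?thesis using X(2) by auto
      qed
      ultimately show False using aS0 by auto
    qed
    have F0eq: "F0 = F' - {(S0, T0)}"
    proof
      show "F0 \<subseteq> F' - {(S0, T0)}"
      proof
        fix X assume "X \<in> F0"
        hence "X \<in> F'" "{x1, x2} \<notin> snd X" unfolding F0_def by auto
        thus "X \<in> F' - {(S0, T0)}" using p0(2) by auto
      qed
    next
      show "F' - {(S0, T0)} \<subseteq> F0"
      proof
        fix X assume "X \<in> F' - {(S0, T0)}"
        hence "X \<in> F'" "X \<noteq> (S0, T0)" by auto
        hence "{x1, x2} \<notin> snd X" using uniq by blast
        thus "X \<in> F0" unfolding F0_def using \<open>X \<in> F'\<close> by blast
      qed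
    qed
    have fF': "finite F'" using pk_finite[OF fV' F'(1)] .
    have c0: "card F0 = card F' - 1" unfolding F0eq using p0(1) by (simp add: card_Diff_singleton)
    have c00: "card F' > 0" using fF' p0(1) card_gt_0_iff by blast
    have cF0: "card F0 + 1 = card F'" using c0 c00 by linarith
    let ?Pa = "({x1, a, x2}, {{x1, a}, {a, x2}})"
    have ax: "a \<noteq> x1" "a \<noteq> x2" using disj(2) X1(2) X2(2) by auto
    have ea: "{x1, a} \<in> E" "{a, x2} \<in> E" using x(1,2) by (simp_all add: insert_commute)
    have Pa3: "is_P3 E {x1, a, x2} {{x1, a}, {a, x2}}" unfolding is_P3_def
      apply (rule_tac exI[of _ x1], rule_tac exI[of _ a], rule_tac exI[of _ x2])
      using ax x(3) ea by auto
    have pPa: "pk V E {?Pa}" apply (rule pk_single[OF _ Pa3]) using a(1) X1(2) X2(2) F1(1) F2(1) by auto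
    have PaQ: "\<forall>X\<in>{?Pa}. \<forall>Y\<in>?Q. fst X \<inter> fst Y = {}"
      using P1(1) P2(1) disj X1(2) X2(2) by auto
    have F0Pa: "\<forall>X\<in>F0. \<forall>Y\<in>{?Pa}. fst X \<inter> fst Y = {}"
    proof (intro ballI)
      fix X Y assume "X \<in> F0" "Y \<in> {?Pa}"
      hence "X \<in> F'" "X \<noteq> (S0, T0)" "Y = ?Pa" using F0eq by auto
      hence "fst X \<inter> S0 = {}" using F'(1) p0(1) unfolding pk_def by (metis fst_conv)
      thus "fst X \<inter> fst Y = {}" using aS0 \<open>Y = ?Pa\<close> by auto
    qed
    have pQa: "pk V E ({?Pa} \<union> ?Q)" using pk_union[OF pPa pQ PaQ] .
    have cQa: "card ({?Pa} \<union> ?Q) = 3" using pk_union_card[OF fV pPa pQ PaQ] cQ by simp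
    have F0Qa: "\<forall>X\<in>F0. \<forall>Y\<in>{?Pa} \<union> ?Q. fst X \<inter> fst Y = {}" using F0Pa F0Q by blast
    have "card (F0 \<union> ({?Pa} \<union> ?Q)) = card F0 + 3" using pk_union_card[OF fV pF0 pQa F0Qa] cQa by simp
    moreover have "card (F0 \<union> ({?Pa} \<union> ?Q)) \<le> lambda V E" using lambda_ge[OF fV pk_union[OF pF0 pQa F0Qa]] .
    ultimately show ?thesis using cF0 F'(2) by simp
  qed
  have lam': "real (lambda V' E') \<ge> real (card V') / 4" using lam unfolding V'_def E'_def D_def .
  have "real (lambda V E) \<ge> real (lambda V' E') + 2" using main by linarith
  thus ?thesis using lam' cV by simp
qed

end
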